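(* Let $V$ be a vector configuration with no element equal to the zero vector and with $\mathrm{DD}(V)>0$. Put $r:=\operatorname{rank}(V)$, $\delta:=\deg^*(V)$ and $d:=|V|-r-1$. Then $V$ admits a codegree$^*$ decomposition of length at least \[ r+1-2\,\mathrm{DD}(V)\;=\;2(d+1-2\delta)-r+1\;=\;3d+4-4\delta-|V|. \]
   Context: A vector configuration is a finite family (repetitions allowed) $V$ of vectors in $\mathbb{R}^r$; a subconfiguration is a subfamily, $\operatorname{rank}(V)=\dim\operatorname{lin}(V)$, and all cardinalities count multiplicities. For a nonzero linear functional $f$ on $\mathbb{R}^r$, the oriented linear hyperplane $H=\{f=0\}$ has sides $H^+=\{f>0\}$, $H^-=\{f<0\}$, $\overline{H}^-=\{f\le 0\}$. The dual codegree of a (sub)configuration $W$ is $\operatorname{codeg}^*(W)=\min_H|\overline{H}^-\cap W|$ and its dual degree is $\deg^*(W)=\max_H|H^+\cap W|-\operatorname{rank}(W)$, both over oriented linear hyperplanes $H$. The covector discrepancy is $\mathrm{DD}(W)=\max_f\big|\,|\{w\in W: f(w)>0\}|-|\{w\in W:f(w)<0\}|\,\big|$ over all linear functionals $f$. A codegree$^*$ decomposition of $V$ of length $m$ is a partition $V=V_0\uplus V_1\uplus\dots\uplus V_m$ into subconfigurations ($V_0$ possibly empty) such that $\operatorname{codeg}^*(V)=\sum_{i=1}^m\operatorname{codeg}^*(V_i)$ and $\operatorname{codeg}^*(V_i)\ge1$ for $1\le i\le m$. *)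

theory Defs
  imports "HOL-Analysis.Analysis" "HOL-Library.Multiset"
begin

text \<open>Linear functionals are linear maps real^'n => real; an oriented linear
  hyperplane is given by a nonzero linear functional f, with H^+ = {f > 0},
  H^- = {f < 0}, closed H^- = {f <= 0}.\<close>

type_synonym 'n vconf = "(real^'n) multiset"

definition nonzero_functionals :: "((real^'n) \<Rightarrow> real) set" where
  "nonzero_functionals = {f. linear f \<and> f \<noteq> (\<lambda>_. 0)}"

definition vrank :: "'n::finite vconf \<Rightarrow> nat" where
  "vrank W = dim (span (set_mset W))"

definition npos :: "((real^'n) \<Rightarrow> real) \<Rightarrow> 'n vconf \<Rightarrow> nat" where
  "npos f W = size (filter_mset (\<lambda>w. f w > 0) W)"

definition nneg :: "((real^'n) \<Rightarrow> real) \<Rightarrow> 'n vconf \<Rightarrow> nat" where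
  "nneg f W = size (filter_mset (\<lambda>w. f w < 0) W)"

definition nclosedneg :: "((real^'n) \<Rightarrow> real) \<Rightarrow> 'n vconf \<Rightarrow> nat" where
  "nclosedneg f W = size (filter_mset (\<lambda>w. f w \<le> 0) W)"

definition codeg_star :: "'n::finite vconf \<Rightarrow> nat" where
  "codeg_star W = Min ((\<lambda>f. nclosedneg f W) ` nonzero_functionals)"

definition deg_star :: "'n::finite vconf \<Rightarrow> int" where
  "deg_star W = int (Max ((\<lambda>f. npos f W) ` nonzero_functionals)) - int (vrank W)"

definition DD :: "'n::finite vconf \<Rightarrow> int" where
  "DD W = Max ((\<lambda>f. \<bar>int (npos f W) - int (nneg f W)\<bar>) ` {f. linear f})"

definition codeg_star_decomp :: "'n::finite vconf \<Rightarrow> 'n vconf \<Rightarrow> 'n vconf list \<Rightarrow> bool" where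
  "codeg_star_decomp V V0 Vs \<longleftrightarrow>
     V = V0 + sum_list Vs \<and>
     codeg_star V = sum_list (map codeg_star Vs) \<and>
     (\<forall>W\<in>set Vs. codeg_star W \<ge> 1)"

end

theory Submission
  imports Defs
begin


definition sg :: "real \<Rightarrow> int" where
  "sg r = (if r > 0 then 1 else if r < 0 then -1 else 0)"

definition SS :: "('a \<Rightarrow> real) \<Rightarrow> 'a multiset \<Rightarrow> int" where
  "SS f W = (\<Sum>x\<in>#W. sg (f x))"

lemma SS_empty[simp]: "SS f {#} = 0" by (simp add: SS_def)
lemma SS_add[simp]: "SS f (A + B) = SS f A + SS f B" by (simp add: SS_def)
lemma SS_add_mset[simp]: "SS f (add_mset x W) = sg (f x) + SS f W" by (simp add: SS_def)
lemma SS_single[simp]: "SS f {#x#} = sg (f x)" by (simp add: SS_def)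

lemma SS_cong: "(\<And>x. x \<in># W \<Longrightarrow> sg (f x) = sg (g x)) \<Longrightarrow> SS f W = SS g W"
  unfolding SS_def by (rule arg_cong[where f=sum_mset], rule image_mset_cong) simp

lemma SS_neg: "SS (\<lambda>x. - f x) W = - SS f W"
  by (induction W) (auto simp: sg_def)

lemma size_filter_sum: "int (size (filter_mset P W)) = (\<Sum>x\<in>#W. if P x then 1 else 0)"
  by (induction W) auto

lemma SS_npos: "SS f W = int (npos f W) - int (nneg f W)"
  unfolding npos_def nneg_def by (induction W) (auto simp: sg_def)

lemma abs_SS_le: "\<bar>SS f W\<bar> \<le> int (size W)"
  by (induction W) (auto simp: sg_def)

lemma SS_filter: "SS f (filter_mset P W) = (\<Sum>x\<in>#W. if P x then sg (f x) else 0)"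
  by (induction W) (auto simp: SS_def)

lemma lex_sign:
  fixes h k :: "'a \<Rightarrow> real"
  assumes "finite A"
  shows "\<exists>e>0. \<forall>x\<in>A. sg (h x + e * k x) = (if h x = 0 then sg (k x) else sg (h x))"
proof -
  define B where "B = {x\<in>A. h x \<noteq> 0}"
  define e where "e = Min (insert 1 ((\<lambda>x. \<bar>h x\<bar> / (\<bar>k x\<bar> + 1)) ` B))"
  have fB: "finite B" using assms by (simp add: B_def)
  have epos: "e > 0" unfolding e_def using fB by (auto simp: B_def)
  have ele: "e \<le> \<bar>h x\<bar> / (\<bar>k x\<bar> + 1)" if "x \<in> B" for x
    unfolding e_def using fB that by (intro Min_le) auto
  have key: "\<bar>e * k x\<bar> < \<bar>h x\<bar>" if "x \<in> B" for x
  proof -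
    have hx: "\<bar>h x\<bar> > 0" using that by (auto simp: B_def)
    have "e * (\<bar>k x\<bar> + 1) \<le> \<bar>h x\<bar>" using ele[OF that]
      by (simp add: pos_le_divide_eq add_pos_nonneg)
    hence "e * \<bar>k x\<bar> < \<bar>h x\<bar>" using epos by (simp add: algebra_simps)
    thus ?thesis using epos by (simp add: abs_mult)
  qed
  show ?thesis
  proof (intro exI[of _ e] conjI ballI epos)
    fix x assume xA: "x \<in> A"
    show "sg (h x + e * k x) = (if h x = 0 then sg (k x) else sg (h x))"
    proof (cases "h x = 0")
      case True thus ?thesis using epos by (auto simp: sg_def zero_less_mult_iff mult_less_0_iff)
    next
      case False
      hence "x \<in> B" using xA by (simp add: B_def)
      from key[OF this] False show ?thesis by (auto simp: sg_def)
    qed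
  qed
qed

lemma lex_SS:
  fixes h k :: "'a \<Rightarrow> real"
  shows "\<exists>e>0. SS (\<lambda>x. h x + e * k x) W = SS h W + SS k (filter_mset (\<lambda>x. h x = 0) W)"
proof -
  obtain e where e: "e > 0" "\<forall>x\<in>set_mset W. sg (h x + e * k x) = (if h x = 0 then sg (k x) else sg (h x))"
    using lex_sign[of "set_mset W" h k] by auto
  have "SS (\<lambda>x. h x + e * k x) W = (\<Sum>x\<in>#W. sg (h x) + (if h x = 0 then sg (k x) else 0))"
    unfolding SS_def
  proof (rule arg_cong[where f=sum_mset], rule image_mset_cong)
    fix x assume "x \<in># W"
    with e(2) show "sg (h x + e * k x) = sg (h x) + (if h x = 0 then sg (k x) else 0)"
      by (auto simp: sg_def)
  qed
  also have "\<dots> = SS h W + SS k (filter_mset (\<lambda>x. h x = 0) W)"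
    by (simp only: SS_filter) (simp add: SS_def sum_mset.distrib)
  finally show ?thesis using e(1) by auto
qed

lemma linear_inner_fun: "linear (\<lambda>x. (a::real^'n) \<bullet> x)"
  by (rule linearI) (simp_all add: inner_add_right)

lemma linear_plus_scaled:
  fixes f g :: "real^'n \<Rightarrow> real"
  assumes "linear f" "linear g"
  shows "linear (\<lambda>x. f x + e * g x)"
  using assms by (intro linearI) (simp_all add: linear_add linear_cmul algebra_simps)

lemma linear_neg_fun:
  fixes f :: "real^'n \<Rightarrow> real"
  assumes "linear f" shows "linear (\<lambda>x. - f x)"
  using assms by (intro linearI) (simp_all add: linear_add linear_cmul)

lemma gen_sub:
  fixes T X :: "(real^'n) set"
  assumes "subspace T" "finite X" "\<forall>x\<in>X. \<exists>t\<in>T. t \<bullet> x \<noteq> 0"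
  shows "\<exists>h\<in>T. \<forall>x\<in>X. h \<bullet> x \<noteq> 0"
  using assms(2,3)
proof (induction X rule: finite_induct)
  case empty show ?case using subspace_0[OF assms(1)] by auto
next
  case (insert x X)
  then obtain h where h: "h \<in> T" "\<forall>y\<in>X. h \<bullet> y \<noteq> 0" by auto
  obtain t where t: "t \<in> T" "t \<bullet> x \<noteq> 0" using insert.prems by auto
  obtain e where e: "e > 0" "\<forall>y\<in>insert x X. sg (h \<bullet> y + e * (t \<bullet> y)) = (if h \<bullet> y = 0 then sg (t \<bullet> y) else sg (h \<bullet> y))"
    using lex_sign[of "insert x X" "\<lambda>y. h \<bullet> y" "\<lambda>y. t \<bullet> y"] insert.hyps(1) by auto
  have mem: "h + e *\<^sub>R t \<in> T" using h(1) t(1) assms(1) by (simp add: subspace_add subspace_scale)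
  have "\<forall>y\<in>insert x X. (h + e *\<^sub>R t) \<bullet> y \<noteq> 0"
  proof
    fix y assume y: "y \<in> insert x X"
    have eq: "(h + e *\<^sub>R t) \<bullet> y = h \<bullet> y + e * (t \<bullet> y)" by (simp add: inner_add_left)
    show "(h + e *\<^sub>R t) \<bullet> y \<noteq> 0"
    proof
      assume z: "(h + e *\<^sub>R t) \<bullet> y = 0"
      from e(2) y have "sg (h \<bullet> y + e * (t \<bullet> y)) = (if h \<bullet> y = 0 then sg (t \<bullet> y) else sg (h \<bullet> y))" by blast
      with z eq have "(if h \<bullet> y = 0 then sg (t \<bullet> y) else sg (h \<bullet> y)) = 0" by (simp add: sg_def)
      moreover have "h \<bullet> y = 0 \<Longrightarrow> y = x" using h(2) y by auto
      ultimately show False using t(2) by (auto simp: sg_def split: if_splits)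
    qed
  qed
  thus ?case using mem by blast
qed

lemma generic_vec:
  fixes X :: "(real^'n) set"
  assumes "finite X" "0 \<notin> X"
  shows "\<exists>u. \<forall>x\<in>X. u \<bullet> x \<noteq> 0"
proof -
  have "\<forall>x\<in>X. \<exists>t\<in>UNIV. t \<bullet> x \<noteq> 0" using assms(2) by (metis UNIV_I inner_eq_zero_iff)
  from gen_sub[OF subspace_UNIV assms(1) this] show ?thesis by auto
qed

lemma orth_exists:
  fixes x :: "real^'n" and S :: "(real^'n) set"
  assumes "x \<notin> span S"
  shows "\<exists>z. (\<forall>s\<in>S. z \<bullet> s = 0) \<and> z \<bullet> x \<noteq> 0"
proof -
  have "span S \<subset> span (insert x S)"
    using assms by (metis insertI1 psubsetI span_base span_mono subset_insertI)
  then obtain z where z: "z \<noteq> 0" "z \<in> span (insert x S)" "\<And>y. y \<in> span S \<Longrightarrow> orthogonal z y"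
    using orthogonal_to_subspace_exists_gen[of S "insert x S"] by blast
  have zs: "\<forall>s\<in>S. z \<bullet> s = 0" using z(3) span_base by (auto simp: orthogonal_def)
  obtain k where k: "z - k *\<^sub>R x \<in> span S" using z(2) span_breakdown_eq by blast
  have "z \<bullet> (z - k *\<^sub>R x) = 0" using z(3)[OF k] by (simp add: orthogonal_def)
  hence "z \<bullet> z = k * (z \<bullet> x)" by (simp add: inner_diff_right)
  hence "z \<bullet> x \<noteq> 0" using z(1) by auto
  with zs show ?thesis by blast
qed

lemma DD_img_finite: "finite ((\<lambda>f. \<bar>int (npos f W) - int (nneg f W)\<bar>) ` A)"
proof -
  have "(\<lambda>f. \<bar>int (npos f W) - int (nneg f W)\<bar>) ` A \<subseteq> {0..int (size W)}"
    using abs_SS_le by (auto simp: SS_npos[symmetric])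
  thus ?thesis by (rule finite_subset) simp
qed

lemma linear_zero_fun: "linear (\<lambda>x::real^'n. 0::real)"
  by (rule linearI) simp_all

lemma DD_ge: "linear f \<Longrightarrow> \<bar>SS f W\<bar> \<le> DD W"
  unfolding DD_def SS_npos by (rule Max_ge[OF DD_img_finite]) auto

lemma DD_ge': assumes "linear f" shows "SS f W \<le> DD W"
  using DD_ge[OF assms, of W] by linarith

lemma DD_ex: "\<exists>f. linear f \<and> \<bar>SS f W\<bar> = DD W"
proof -
  have ne: "(\<lambda>f. \<bar>int (npos f W) - int (nneg f W)\<bar>) ` {f. linear f} \<noteq> {}"
    using linear_zero_fun by blast
  from Max_in[OF DD_img_finite ne] show ?thesis unfolding DD_def SS_npos by auto
qed

lemma DD_ex_pos: "\<exists>f. linear f \<and> SS f W = DD W"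
proof -
  obtain f where f: "linear f" "\<bar>SS f W\<bar> = DD W" using DD_ex by blast
  show ?thesis
  proof (cases "SS f W \<ge> 0")
    case True thus ?thesis using f by auto
  next
    case False thus ?thesis using f linear_neg_fun[OF f(1)] SS_neg[of f W]
      by (intro exI[of _ "\<lambda>x. - f x"]) auto
  qed
qed

lemma DD_nonneg: "DD W \<ge> 0"
  using DD_ge[OF linear_zero_fun, of W] by auto

lemma DD_eq_SS: "(\<And>f. linear f \<Longrightarrow> SS f A = SS f B) \<Longrightarrow> DD A = DD B"
  unfolding DD_def SS_npos[symmetric] by (rule arg_cong[where f=Max], rule image_cong) auto

lemma nzf_inner: "(a::real^'n) \<noteq> 0 \<Longrightarrow> (\<lambda>x. a \<bullet> x) \<in> nonzero_functionals"
  unfolding nonzero_functionals_def using linear_inner_fun by (auto dest: fun_cong[where x=a])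

lemma nzf_ne: "(nonzero_functionals :: ((real^'n) \<Rightarrow> real) set) \<noteq> {}"
proof -
  have "(1::real^'n) \<noteq> 0" by simp
  thus ?thesis using nzf_inner by blast
qed

lemma cnt_img_finite: "finite ((\<lambda>f. size (filter_mset (P f) W)) ` A)"
  by (rule finite_subset[of _ "{0..size W}"]) auto

lemma codeg_le: "f \<in> nonzero_functionals \<Longrightarrow> codeg_star W \<le> nclosedneg f W"
  unfolding codeg_star_def nclosedneg_def by (rule Min_le[OF cnt_img_finite]) auto

lemma codeg_ex: "\<exists>f\<in>nonzero_functionals. codeg_star W = nclosedneg f W"
proof -
  have ne: "(\<lambda>f. nclosedneg f W) ` nonzero_functionals \<noteq> {}" using nzf_ne by blast
  have fin: "finite ((\<lambda>f. nclosedneg f W) ` nonzero_functionals)"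
    unfolding nclosedneg_def by (rule cnt_img_finite)
  from Min_in[OF fin ne] show ?thesis unfolding codeg_star_def by auto
qed

definition MX :: "'n::finite vconf \<Rightarrow> nat" where
  "MX W = Max ((\<lambda>f. npos f W) ` nonzero_functionals)"

lemma MX_ge: "f \<in> nonzero_functionals \<Longrightarrow> npos f W \<le> MX W"
  unfolding MX_def npos_def by (rule Max_ge[OF cnt_img_finite]) auto

lemma MX_ex: "\<exists>f\<in>nonzero_functionals. MX W = npos f W"
proof -
  have ne: "(\<lambda>f. npos f W) ` nonzero_functionals \<noteq> {}" using nzf_ne by blast
  have fin: "finite ((\<lambda>f. npos f W) ` nonzero_functionals)"
    unfolding npos_def by (rule cnt_img_finite)
  from Max_in[OF fin ne] show ?thesis unfolding MX_def by auto
qed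

lemma ncn_add[simp]: "nclosedneg f (A + B) = nclosedneg f A + nclosedneg f B"
  by (simp add: nclosedneg_def)

lemma codeg_superadd: "codeg_star A + codeg_star B \<le> codeg_star (A + B)"
proof -
  obtain f where f: "f \<in> nonzero_functionals" "codeg_star (A + B) = nclosedneg f (A + B)"
    using codeg_ex by blast
  thus ?thesis using codeg_le[OF f(1), of A] codeg_le[OF f(1), of B] by simp
qed

lemma size_filter_mono: "(\<And>x. x \<in># W \<Longrightarrow> P x \<Longrightarrow> Q x) \<Longrightarrow> size (filter_mset P W) \<le> size (filter_mset Q W)"
  by (induction W) (auto simp: add_mset_commute)

lemma npos_nneg_size: "(\<And>x. x \<in># W \<Longrightarrow> g x \<noteq> 0) \<Longrightarrow> npos g W + nneg g W = size W"
  unfolding npos_def nneg_def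
proof (induction W)
  case empty thus ?case by simp
next
  case (add x W)
  hence "g x \<noteq> 0" by simp
  with add show ?case by (cases "g x > 0") auto
qed

section \<open>Generic perturbation\<close>

lemma pert:
  fixes f :: "real^'n \<Rightarrow> real" and V :: "('n::finite) vconf"
  assumes "linear f" "0 \<notin># V"
  shows "\<exists>g. linear g \<and> (\<forall>x\<in>#V. g x \<noteq> 0 \<and> (f x > 0 \<longrightarrow> g x > 0) \<and> (f x < 0 \<longrightarrow> g x < 0)) \<and> SS f V \<le> SS g V"
proof -
  obtain u0 where u0: "\<forall>x\<in>set_mset V. u0 \<bullet> x \<noteq> 0" using generic_vec[of "set_mset V"] assms(2) by auto
  define s where "s = SS (\<lambda>x. u0 \<bullet> x) (filter_mset (\<lambda>x. f x = 0) V)"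
  define u where "u = (if s \<ge> 0 then u0 else - u0)"
  have u: "\<forall>x\<in>set_mset V. u \<bullet> x \<noteq> 0" using u0 by (auto simp: u_def)
  have us: "SS (\<lambda>x. u \<bullet> x) (filter_mset (\<lambda>x. f x = 0) V) \<ge> 0"
    using SS_neg[of "\<lambda>x. u0 \<bullet> x" "filter_mset (\<lambda>x. f x = 0) V"] by (auto simp: u_def s_def)
  obtain e where e: "e > 0" "\<forall>x\<in>set_mset V. sg (f x + e * (u \<bullet> x)) = (if f x = 0 then sg (u \<bullet> x) else sg (f x))"
    using lex_sign[of "set_mset V" f "\<lambda>x. u \<bullet> x"] by auto
  define g where "g = (\<lambda>x. f x + e * (u \<bullet> x))"
  have lin: "linear g" unfolding g_def by (rule linear_plus_scaled[OF assms(1) linear_inner_fun])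
  have pw: "\<forall>x\<in>#V. g x \<noteq> 0 \<and> (f x > 0 \<longrightarrow> g x > 0) \<and> (f x < 0 \<longrightarrow> g x < 0)"
  proof
    fix x assume x: "x \<in># V"
    have "sg (g x) = (if f x = 0 then sg (u \<bullet> x) else sg (f x))" using e(2) x by (simp add: g_def)
    thus "g x \<noteq> 0 \<and> (f x > 0 \<longrightarrow> g x > 0) \<and> (f x < 0 \<longrightarrow> g x < 0)"
      using u x by (auto simp: sg_def split: if_splits)
  qed
  have "SS g V = (\<Sum>x\<in>#V. sg (f x) + (if f x = 0 then sg (u \<bullet> x) else 0))"
    unfolding SS_def
  proof (rule arg_cong[where f=sum_mset], rule image_mset_cong)
    fix x assume "x \<in># V"
    with e(2) show "sg (g x) = sg (f x) + (if f x = 0 then sg (u \<bullet> x) else 0)"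
      by (auto simp: sg_def g_def)
  qed
  also have "\<dots> = SS f V + SS (\<lambda>x. u \<bullet> x) (filter_mset (\<lambda>x. f x = 0) V)"
    by (simp only: SS_filter) (simp add: SS_def sum_mset.distrib)
  finally have "SS f V \<le> SS g V" using us by linarith
  with lin pw show ?thesis by blast
qed

lemma nonzero_fun_of_val: "linear g \<Longrightarrow> g x \<noteq> 0 \<Longrightarrow> g \<in> nonzero_functionals"
  unfolding nonzero_functionals_def by auto

lemma DD_formula:
  fixes V :: "('n::finite) vconf"
  assumes "0 \<notin># V" "V \<noteq> {#}"
  shows "DD V = 2 * int (MX V) - int (size V)"
proof -
  obtain x0 where x0: "x0 \<in># V" using assms(2) by (meson multiset_nonemptyE)
  have gen: "SS g V = 2 * int (npos g V) - int (size V)" if "\<forall>x\<in>#V. g x \<noteq> 0" for g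
    using npos_nneg_size[of V g] that SS_npos[of g V] by auto
  have up: "SS f V \<le> 2 * int (MX V) - int (size V)" if lf: "linear f" for f
  proof -
    obtain g where g: "linear g" "\<forall>x\<in>#V. g x \<noteq> 0 \<and> (f x > 0 \<longrightarrow> g x > 0) \<and> (f x < 0 \<longrightarrow> g x < 0)" "SS f V \<le> SS g V"
      using pert[OF lf assms(1)] by blast
    have "g \<in> nonzero_functionals" using g x0 nonzero_fun_of_val by blast
    hence "npos g V \<le> MX V" by (rule MX_ge)
    with g gen[of g] show ?thesis by auto
  qed
  have le: "DD V \<le> 2 * int (MX V) - int (size V)"
  proof -
    obtain f where f: "linear f" "\<bar>SS f V\<bar> = DD V" using DD_ex by blast
    have "SS f V \<le> 2 * int (MX V) - int (size V)" by (rule up[OF f(1)])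
    moreover have "- SS f V \<le> 2 * int (MX V) - int (size V)"
      using up[OF linear_neg_fun[OF f(1)]] SS_neg[of f V] by simp
    ultimately show ?thesis using f(2) by linarith
  qed
  have ge: "2 * int (MX V) - int (size V) \<le> DD V"
  proof -
    obtain f where f: "f \<in> nonzero_functionals" "MX V = npos f V" using MX_ex by blast
    have lf: "linear f" using f(1) by (simp add: nonzero_functionals_def)
    obtain g where g: "linear g" "\<forall>x\<in>#V. g x \<noteq> 0 \<and> (f x > 0 \<longrightarrow> g x > 0) \<and> (f x < 0 \<longrightarrow> g x < 0)" "SS f V \<le> SS g V"
      using pert[OF lf assms(1)] by blast
    have "npos f V \<le> npos g V" unfolding npos_def by (rule size_filter_mono) (use g in auto)
    hence "2 * int (MX V) - int (size V) \<le> SS g V" using gen[of g] g f(2) by auto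
    also have "\<dots> \<le> DD V" by (rule DD_ge'[OF g(1)])
    finally show ?thesis .
  qed
  from le ge show ?thesis by linarith
qed



definition tpar :: "real^'n \<Rightarrow> real^'n \<Rightarrow> real^'n \<Rightarrow> real" where
  "tpar p a b = ((p - a) \<bullet> (b - a)) / ((b - a) \<bullet> (b - a))"

definition fd :: "real^'n \<Rightarrow> real^'n \<Rightarrow> real^'n \<Rightarrow> real" where
  "fd p a b = (p - a - tpar p a b *\<^sub>R (b - a)) \<bullet> (p - a - tpar p a b *\<^sub>R (b - a))"

lemma fd_nonneg: "fd p a b \<ge> 0"
  unfolding fd_def by simp

lemma fd_orth:
  assumes "a \<noteq> b" shows "(p - a - tpar p a b *\<^sub>R (b - a)) \<bullet> (b - a) = 0"
proof -
  have "(b - a) \<bullet> (b - a) \<noteq> 0" using assms by simp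
  thus ?thesis unfolding tpar_def by (simp add: inner_diff_left)
qed

lemma tpar_line:
  assumes "a \<noteq> b" shows "tpar (a + t *\<^sub>R (b - a)) a b = t"
proof -
  have "(b - a) \<bullet> (b - a) \<noteq> 0" using assms by simp
  thus ?thesis unfolding tpar_def by simp
qed

lemma fd_line: assumes "a \<noteq> b" shows "fd (a + t *\<^sub>R (b - a)) a b = 0"
  unfolding fd_def tpar_line[OF assms] by simp

lemma fd_zero: assumes "fd p a b = 0" shows "p = a + tpar p a b *\<^sub>R (b - a)"
proof -
  have "p - a - tpar p a b *\<^sub>R (b - a) = 0" using assms unfolding fd_def by simp
  thus ?thesis by (simp add: algebra_simps)
qed

lemma fd_formula:
  assumes "a \<noteq> b"
  shows "fd p a b = (p - a) \<bullet> (p - a) - ((p - a) \<bullet> (b - a))^2 / ((b - a) \<bullet> (b - a))"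
proof -
  define v where "v = p - a"
  define w where "w = b - a"
  have w0: "w \<bullet> w \<noteq> 0" using assms by (simp add: w_def)
  have "fd p a b = (v - (v \<bullet> w / (w \<bullet> w)) *\<^sub>R w) \<bullet> (v - (v \<bullet> w / (w \<bullet> w)) *\<^sub>R w)"
    unfolding fd_def tpar_def v_def w_def by simp
  also have "\<dots> = v \<bullet> v - 2 * (v \<bullet> w / (w \<bullet> w)) * (v \<bullet> w) + (v \<bullet> w / (w \<bullet> w))^2 * (w \<bullet> w)"
    by (simp add: inner_diff_left inner_diff_right inner_commute power2_eq_square algebra_simps)
  also have "\<dots> = v \<bullet> v - (v \<bullet> w)^2 / (w \<bullet> w)"
    using w0 by (simp add: power2_eq_square field_simps)
  finally show ?thesis by (simp add: v_def w_def)
qed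

lemma kelly_real:
  fixes n D s s' :: real
  assumes "n > 0" "D > 0" "s * s' \<ge> 0" "\<bar>s'\<bar> \<le> \<bar>s\<bar>" "s \<noteq> s'"
  shows "0 < (s'^2 * n + D) - (s * s' * n + D)^2 / (s^2 * n + D)"
    and "(s'^2 * n + D) - (s * s' * n + D)^2 / (s^2 * n + D) < D"
proof -
  define B where "B = s^2 * n + D"
  have B: "B > 0" unfolding B_def using assms(1,2) by (simp add: add_nonneg_pos)
  have id: "(s'^2 * n + D) * B - (s * s' * n + D)^2 = n * D * (s - s')^2"
    unfolding B_def by (simp add: power2_eq_square algebra_simps)
  have eq: "(s'^2 * n + D) - (s * s' * n + D)^2 / B = n * D * (s - s')^2 / B"
    using B id by (simp add: field_simps)
  have pos: "n * D * (s - s')^2 > 0" using assms(1,2,5) by simp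
  show "0 < (s'^2 * n + D) - (s * s' * n + D)^2 / (s^2 * n + D)"
    using eq pos B unfolding B_def by simp
  have "s'^2 \<le> s * s'"
  proof -
    have "s'^2 = \<bar>s'\<bar> * \<bar>s'\<bar>" by (simp add: power2_eq_square abs_mult_self_eq)
    also have "\<dots> \<le> \<bar>s\<bar> * \<bar>s'\<bar>" by (rule mult_right_mono[OF assms(4) abs_ge_zero])
    also have "\<dots> = s * s'" using assms(3) by (simp add: abs_mult[symmetric])
    finally show ?thesis .
  qed
  moreover have "(s - s')^2 = s^2 - 2 * (s * s') + s'^2" by (simp add: power2_eq_square algebra_simps)
  ultimately have "(s - s')^2 \<le> s^2" using assms(3) by linarith
  hence "n * (s - s')^2 \<le> n * s^2" using assms(1) by simp
  hence "n * (s - s')^2 < B" unfolding B_def using assms(2) by (simp add: algebra_simps)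
  hence "n * D * (s - s')^2 < D * B" using assms(2) by (simp add: algebra_simps)
  hence "n * D * (s - s')^2 / B < D" using B by (simp add: divide_less_eq)
  thus "(s'^2 * n + D) - (s * s' * n + D)^2 / (s^2 * n + D) < D" using eq unfolding B_def by simp
qed

lemma kelly_step:
  fixes u h q :: "real^'n"
  assumes "u \<noteq> 0" "h \<bullet> u = 0" "h \<bullet> h > 0" "s \<noteq> s'" "s * s' \<ge> 0" "\<bar>s'\<bar> \<le> \<bar>s\<bar>"
  shows "0 < fd (q + s' *\<^sub>R u) (q + h) (q + s *\<^sub>R u)" "fd (q + s' *\<^sub>R u) (q + h) (q + s *\<^sub>R u) < h \<bullet> h"
proof -
  define n where "n = u \<bullet> u"
  define D where "D = h \<bullet> h"
  have n: "n > 0" using assms(1) by (simp add: n_def)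
  have uh: "u \<bullet> h = 0" using assms(2) by (simp add: inner_commute)
  have ne: "q + h \<noteq> q + s *\<^sub>R u"
  proof
    assume "q + h = q + s *\<^sub>R u"
    hence "h = s *\<^sub>R u" by simp
    hence "h \<bullet> h = s * (h \<bullet> u)" by simp
    thus False using assms(2,3) by simp
  qed
  have v: "(q + s' *\<^sub>R u - (q + h)) \<bullet> (q + s' *\<^sub>R u - (q + h)) = s'^2 * n + D"
    by (simp add: n_def D_def inner_diff_left inner_diff_right uh assms(2) power2_eq_square algebra_simps)
  have vw: "(q + s' *\<^sub>R u - (q + h)) \<bullet> (q + s *\<^sub>R u - (q + h)) = s * s' * n + D"
    by (simp add: n_def D_def inner_diff_left inner_diff_right uh assms(2) algebra_simps)
  have w: "(q + s *\<^sub>R u - (q + h)) \<bullet> (q + s *\<^sub>R u - (q + h)) = s^2 * n + D"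
    by (simp add: n_def D_def inner_diff_left inner_diff_right uh assms(2) power2_eq_square algebra_simps)
  have F: "fd (q + s' *\<^sub>R u) (q + h) (q + s *\<^sub>R u) = (s'^2 * n + D) - (s * s' * n + D)^2 / (s^2 * n + D)"
    using fd_formula[OF ne, of "q + s' *\<^sub>R u"] v vw w by simp
  show "0 < fd (q + s' *\<^sub>R u) (q + h) (q + s *\<^sub>R u)"
    using kelly_real(1)[OF n _ assms(5,6,4)] assms(3) F by (simp add: D_def)
  show "fd (q + s' *\<^sub>R u) (q + h) (q + s *\<^sub>R u) < h \<bullet> h"
    using kelly_real(2)[OF n _ assms(5,6,4)] assms(3) F by (simp add: D_def)
qed

lemma pair_choice:
  fixes a b t :: real
  assumes "a \<noteq> b" "(a \<ge> t) = (b \<ge> t)"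
  obtains i j where "i \<in> {a, b}" "j \<in> {a, b}" "i \<noteq> j" "(i - t) * (j - t) \<ge> 0" "\<bar>i - t\<bar> \<le> \<bar>j - t\<bar>"
proof -
  have prod: "(a - t) * (b - t) \<ge> 0" using assms(2)
    by (cases "a \<ge> t") (auto simp: zero_le_mult_iff)
  show ?thesis
  proof (cases "\<bar>a - t\<bar> \<le> \<bar>b - t\<bar>")
    case True
    show ?thesis by (rule that[of a b]) (use assms(1) prod True in simp_all)
  next
    case False
    have "(b - t) * (a - t) \<ge> 0" using prod by (simp add: mult.commute)
    thus ?thesis by (intro that[of b a]) (use assms(1) False in simp_all)
  qed
qed

lemma three_choice:
  fixes r1 r2 r3 t :: real
  assumes "r1 \<noteq> r2" "r1 \<noteq> r3" "r2 \<noteq> r3"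
  obtains i j where "i \<in> {r1, r2, r3}" "j \<in> {r1, r2, r3}" "i \<noteq> j" "(i - t) * (j - t) \<ge> 0" "\<bar>i - t\<bar> \<le> \<bar>j - t\<bar>"
proof -
  have "(r1 \<ge> t) = (r2 \<ge> t) \<or> (r1 \<ge> t) = (r3 \<ge> t) \<or> (r2 \<ge> t) = (r3 \<ge> t)"
    by (cases "r1 \<ge> t"; cases "r2 \<ge> t"; cases "r3 \<ge> t") simp_all
  thus ?thesis
  proof (elim disjE)
    assume "(r1 \<ge> t) = (r2 \<ge> t)"
    then obtain i j where "i \<in> {r1, r2}" "j \<in> {r1, r2}" "i \<noteq> j" "(i - t) * (j - t) \<ge> 0" "\<bar>i - t\<bar> \<le> \<bar>j - t\<bar>"
      using pair_choice[OF assms(1)] by metis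
    thus ?thesis using that[of i j] by auto
  next
    assume "(r1 \<ge> t) = (r3 \<ge> t)"
    then obtain i j where "i \<in> {r1, r3}" "j \<in> {r1, r3}" "i \<noteq> j" "(i - t) * (j - t) \<ge> 0" "\<bar>i - t\<bar> \<le> \<bar>j - t\<bar>"
      using pair_choice[OF assms(2)] by metis
    thus ?thesis using that[of i j] by auto
  next
    assume "(r2 \<ge> t) = (r3 \<ge> t)"
    then obtain i j where "i \<in> {r2, r3}" "j \<in> {r2, r3}" "i \<noteq> j" "(i - t) * (j - t) \<ge> 0" "\<bar>i - t\<bar> \<le> \<bar>j - t\<bar>"
      using pair_choice[OF assms(3)] by metis
    thus ?thesis using that[of i j] by auto
  qed
qed

lemma kelly:
  fixes D :: "(real^'n) set"
  assumes fin: "finite D" and ex: "\<exists>p\<in>D. \<exists>a\<in>D. \<exists>b\<in>D. a \<noteq> b \<and> fd p a b > 0"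
  shows "\<exists>a\<in>D. \<exists>b\<in>D. a \<noteq> b \<and> (\<forall>x\<in>D. fd x a b = 0 \<longrightarrow> x = a \<or> x = b)"
proof -
  define T where "T = {(p, a, b). p \<in> D \<and> a \<in> D \<and> b \<in> D \<and> a \<noteq> b \<and> fd p a b > 0}"
  have finT: "finite T"
    by (rule finite_subset[of _ "D \<times> D \<times> D"]) (auto simp: T_def fin)
  have neT: "T \<noteq> {}" using ex by (auto simp: T_def)
  define F :: "(real^'n) \<times> (real^'n) \<times> (real^'n) \<Rightarrow> real" where "F = (\<lambda>(p, a, b). fd p a b)"
  define m where "m = arg_min_on F T"
  have mT: "m \<in> T" and mmin: "\<not> (\<exists>z\<in>T. F z < F m)"
    using arg_min_if_finite[OF finT neT, of F] by (auto simp: m_def)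
  obtain p a b where pab: "m = (p, a, b)" by (cases m) auto
  have pD: "p \<in> D" and aD: "a \<in> D" and bD: "b \<in> D" and ab: "a \<noteq> b" and fp: "fd p a b > 0"
    using mT by (auto simp: T_def pab)
  have min': "fd p a b \<le> fd x y z" if xyz: "(x, y, z) \<in> T" for x y z
  proof -
    have "\<not> F (x, y, z) < F m" using mmin xyz by blast
    thus ?thesis by (simp add: F_def pab)
  qed
  have ord: "\<forall>x\<in>D. fd x a b = 0 \<longrightarrow> x = a \<or> x = b"
  proof (intro ballI impI)
    fix x assume xD: "x \<in> D" and fx: "fd x a b = 0"
    show "x = a \<or> x = b"
    proof (rule ccontr)
      assume nx: "\<not> (x = a \<or> x = b)"
      define u where "u = b - a"
      have u0: "u \<noteq> 0" using ab by (simp add: u_def)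
      define t0 where "t0 = tpar p a b"
      define q where "q = a + t0 *\<^sub>R u"
      define h where "h = p - q"
      have heq: "h = p - a - tpar p a b *\<^sub>R (b - a)" by (simp add: h_def q_def t0_def u_def)
      have hu: "h \<bullet> u = 0" using fd_orth[OF ab, of p] heq by (simp add: u_def)
      have hh: "h \<bullet> h = fd p a b" by (simp add: fd_def heq)
      define tx where "tx = tpar x a b"
      have xeq: "x = a + tx *\<^sub>R u" using fd_zero[OF fx] by (simp add: tx_def u_def)
      have tx0: "tx \<noteq> 0" using nx xeq by auto
      have tx1: "tx \<noteq> 1" using nx xeq by (auto simp: u_def)
      obtain i j where ij: "i \<in> {0, 1, tx}" "j \<in> {0, 1, tx}" "i \<noteq> j"
        "(i - t0) * (j - t0) \<ge> 0" "\<bar>i - t0\<bar> \<le> \<bar>j - t0\<bar>"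
        by (rule three_choice[OF zero_neq_one tx0[symmetric] tx1[symmetric], of t0])
      have ptD: "a + k *\<^sub>R u \<in> D" if "k \<in> {0, 1, tx}" for k
        using that aD bD xD xeq by (auto simp: u_def)
      have Xe: "a + i *\<^sub>R u = q + (i - t0) *\<^sub>R u" by (simp add: q_def algebra_simps)
      have Ye: "a + j *\<^sub>R u = q + (j - t0) *\<^sub>R u" by (simp add: q_def algebra_simps)
      have Pe: "p = q + h" by (simp add: h_def)
      have hpos: "h \<bullet> h > 0" using hh fp by simp
      have sne: "j - t0 \<noteq> i - t0" using ij(3) by simp
      have ij4: "(j - t0) * (i - t0) \<ge> 0" using ij(4) by (simp add: mult.commute)
      note ks = kelly_step[OF u0 hu hpos sne ij4 ij(5), of q]
      have pne: "p \<noteq> a + j *\<^sub>R u"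
      proof
        assume "p = a + j *\<^sub>R u"
        hence "fd p a b = 0" using fd_line[OF ab, of j] by (simp add: u_def)
        thus False using fp by simp
      qed
      have XD: "a + i *\<^sub>R u \<in> D" using ptD[OF ij(1)] .
      have YD: "a + j *\<^sub>R u \<in> D" using ptD[OF ij(2)] .
      have fpos: "0 < fd (a + i *\<^sub>R u) p (a + j *\<^sub>R u)" using ks(1) Xe Ye Pe by simp
      have "(a + i *\<^sub>R u, p, a + j *\<^sub>R u) \<in> T"
        unfolding T_def using XD YD pD pne fpos by simp
      from min'[OF this] have "fd p a b \<le> fd (a + i *\<^sub>R u) p (a + j *\<^sub>R u)" .
      also have "\<dots> < h \<bullet> h" using ks(2) Xe Ye Pe by simp
      finally show False using hh by simp
    qed
  qed
  thus ?thesis using aD bD ab by blast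
qed



lemma orth_span:
  fixes h :: "real^'n"
  assumes "x \<in> span S" "\<And>s. s \<in> S \<Longrightarrow> h \<bullet> s = 0"
  shows "h \<bullet> x = 0"
  using orthogonal_to_span[OF assms(1), of h] assms(2) by (simp add: orthogonal_def)

lemma span2_repr:
  fixes a b x :: "real^'n"
  assumes "x \<in> span {a, b}"
  shows "\<exists>k1 k2. x = k1 *\<^sub>R a + k2 *\<^sub>R b"
proof -
  obtain k where "x - k *\<^sub>R a \<in> span {b}" using assms span_breakdown_eq by blast
  then obtain k2 where "x - k *\<^sub>R a = k2 *\<^sub>R b" using span_singleton by auto
  hence "x = k *\<^sub>R a + k2 *\<^sub>R b" by (simp add: algebra_simps)
  thus ?thesis by blast
qed

lemma dim_le_2:
  fixes a b :: "real^'n"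
  assumes "X \<subseteq> span {a, b}" shows "dim X \<le> 2"
proof -
  have "dim X \<le> card {a, b}" by (rule dim_le_card[OF assms]) simp
  also have "\<dots> \<le> 2" by (simp add: card_insert_le_m1)
  finally show ?thesis .
qed

lemma SG_vec:
  fixes X :: "(real^'n) set"
  assumes finX: "finite X" and X0: "0 \<notin> X" and dX: "dim X \<ge> 3"
  shows "\<exists>a\<in>X. \<exists>b\<in>X. (\<forall>c. b \<noteq> c *\<^sub>R a) \<and>
            (\<forall>x\<in>X. x \<in> span {a, b} \<longrightarrow> (\<exists>c. x = c *\<^sub>R a) \<or> (\<exists>c. x = c *\<^sub>R b))"
proof -
  obtain u where u: "\<forall>x\<in>X. u \<bullet> x \<noteq> 0" using generic_vec[OF finX X0] by blast
  define nm where "nm x = (1 / (u \<bullet> x)) *\<^sub>R x" for x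
  have nmu: "u \<bullet> nm x = 1" if "x \<in> X" for x using u that by (simp add: nm_def)
  have nmx: "x = (u \<bullet> x) *\<^sub>R nm x" if "x \<in> X" for x using u that by (simp add: nm_def)
  define D where "D = nm ` X"
  have finD: "finite D" using finX by (simp add: D_def)
  have hyp: "\<exists>p\<in>D. \<exists>a\<in>D. \<exists>b\<in>D. a \<noteq> b \<and> fd p a b > 0"
  proof (rule ccontr)
    assume nh: "\<not> ?thesis"
    have Xne: "X \<noteq> {}" using dX by auto
    then obtain x1 where x1: "x1 \<in> X" by blast
    show False
    proof (cases "\<forall>x\<in>X. nm x = nm x1")
      case True
      have "X \<subseteq> span {x1, x1}"
      proof
        fix x assume x: "x \<in> X"
        have "x = (u \<bullet> x) *\<^sub>R nm x1" using nmx[OF x] True x by simp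
        also have "\<dots> = ((u \<bullet> x) / (u \<bullet> x1)) *\<^sub>R x1" by (simp add: nm_def)
        finally show "x \<in> span {x1, x1}" by (metis insertI1 span_base span_scale)
      qed
      from dim_le_2[OF this] dX show False by simp
    next
      case False
      then obtain x2 where x2: "x2 \<in> X" "nm x2 \<noteq> nm x1" by blast
      have "X \<subseteq> span {nm x1, nm x2}"
      proof
        fix x assume x: "x \<in> X"
        have nh': "\<forall>p\<in>X. \<forall>a\<in>X. \<forall>b\<in>X. nm a \<noteq> nm b \<longrightarrow> \<not> fd (nm p) (nm a) (nm b) > 0"
          using nh by (auto simp: D_def)
        have "\<not> fd (nm x) (nm x1) (nm x2) > 0" using nh' x x1 x2 by metis
        hence "fd (nm x) (nm x1) (nm x2) = 0" using fd_nonneg[of "nm x" "nm x1" "nm x2"] by simp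
        hence e: "nm x = nm x1 + tpar (nm x) (nm x1) (nm x2) *\<^sub>R (nm x2 - nm x1)" by (rule fd_zero)
        have "nm x \<in> span {nm x1, nm x2}"
          by (subst e) (intro span_add span_scale span_diff span_base; simp)
        hence "(u \<bullet> x) *\<^sub>R nm x \<in> span {nm x1, nm x2}" by (rule span_scale)
        thus "x \<in> span {nm x1, nm x2}" using nmx[OF x] by simp
      qed
      from dim_le_2[OF this] dX show False by simp
    qed
  qed
  obtain a' b' where ab': "a' \<in> D" "b' \<in> D" "a' \<noteq> b'" "\<forall>x\<in>D. fd x a' b' = 0 \<longrightarrow> x = a' \<or> x = b'"
    using kelly[OF finD hyp] by blast
  obtain a where a: "a \<in> X" "a' = nm a" using ab'(1) D_def by blast
  obtain b where b: "b \<in> X" "b' = nm b" using ab'(2) D_def by blast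
  have indep: "\<forall>c. b \<noteq> c *\<^sub>R a"
  proof (intro allI notI)
    fix c assume bc: "b = c *\<^sub>R a"
    have c0: "c \<noteq> 0" using bc b X0 by auto
    have "nm b = nm a" using bc c0 u a by (simp add: nm_def)
    thus False using ab'(3) a b by simp
  qed
  have ord: "\<forall>x\<in>X. x \<in> span {a, b} \<longrightarrow> (\<exists>c. x = c *\<^sub>R a) \<or> (\<exists>c. x = c *\<^sub>R b)"
  proof (intro ballI impI)
    fix x assume x: "x \<in> X" and xs: "x \<in> span {a, b}"
    obtain k1 k2 where k: "x = k1 *\<^sub>R a + k2 *\<^sub>R b" using span2_repr[OF xs] by blast
    define al where "al = k1 * (u \<bullet> a) / (u \<bullet> x)"
    define be where "be = k2 * (u \<bullet> b) / (u \<bullet> x)"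
    have ua: "u \<bullet> a \<noteq> 0" "u \<bullet> b \<noteq> 0" "u \<bullet> x \<noteq> 0" using u a b x by auto
    have nmxe: "nm x = al *\<^sub>R nm a + be *\<^sub>R nm b"
      using ua by (simp add: nm_def k al_def be_def scaleR_add_right)
    have "u \<bullet> nm x = al * (u \<bullet> nm a) + be * (u \<bullet> nm b)" by (simp add: nmxe inner_add_right)
    hence "al + be = 1" using nmu[OF x] nmu[OF a(1)] nmu[OF b(1)] by simp
    hence al: "al = 1 - be" by simp
    have "nm x = nm a + be *\<^sub>R (nm b - nm a)" using nmxe unfolding al by (simp add: scaleR_diff_left scaleR_diff_right)
    hence "fd (nm x) a' b' = 0" using fd_line[OF ab'(3)] a b by simp
    moreover have "nm x \<in> D" using x by (simp add: D_def)
    ultimately have "nm x = nm a \<or> nm x = nm b" using ab'(4) a b by blast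
    thus "(\<exists>c. x = c *\<^sub>R a) \<or> (\<exists>c. x = c *\<^sub>R b)"
    proof
      assume "nm x = nm a"
      hence "x = ((u \<bullet> x) / (u \<bullet> a)) *\<^sub>R a" using nmx[OF x] by (simp add: nm_def)
      thus ?thesis by blast
    next
      assume "nm x = nm b"
      hence "x = ((u \<bullet> x) / (u \<bullet> b)) *\<^sub>R b" using nmx[OF x] by (simp add: nm_def)
      thus ?thesis by blast
    qed
  qed
  show ?thesis using a(1) b(1) indep ord by blast
qed



lemma sum_ind_diff:
  "(\<Sum>x\<in>#W. k * ((if P x then 1 else 0) - (if Q x then 1 else 0))) =
     k * (int (size (filter_mset P W)) - int (size (filter_mset Q W)))"
  by (induction W) (auto simp: algebra_simps)

lemma SS_inner_cong:
  fixes \<psi> \<phi> :: "real^'n"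
  assumes "\<And>x. x \<in># W \<Longrightarrow> \<psi> \<bullet> x = \<phi> \<bullet> x"
  shows "SS (\<lambda>x. \<psi> \<bullet> x) W = SS (\<lambda>x. \<phi> \<bullet> x) W"
  using assms by (intro SS_cong) simp

lemma size_filter_less: "x \<in># M \<Longrightarrow> \<not> Q x \<Longrightarrow> size (filter_mset Q M) < size M"
proof -
  assume x: "x \<in># M" and q: "\<not> Q x"
  have "size M = size (filter_mset Q M) + size (filter_mset (\<lambda>y. \<not> Q y) M)"
    by (metis multiset_partition size_union)
  moreover have "filter_mset (\<lambda>y. \<not> Q y) M \<noteq> {#}" using x q by auto
  hence "size (filter_mset (\<lambda>y. \<not> Q y) M) \<noteq> 0" by simp
  ultimately show ?thesis by linarith
qed

lemma scale_unique:
  fixes b :: "real^'n"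
  assumes "b \<noteq> 0" "c *\<^sub>R b = d *\<^sub>R b" shows "c = d"
  using assms by (simp add: scaleR_cancel_right)

lemma claim2:
  fixes W :: "(real^'n) multiset"
  assumes "\<exists>\<phi>. SS (\<lambda>x. \<phi> \<bullet> x) W \<noteq> 0" "dim (set_mset W) \<ge> 3"
  shows "\<exists>w\<in>#W. w \<noteq> 0 \<and> (\<exists>\<psi>. \<psi> \<bullet> w = 0 \<and> SS (\<lambda>x. \<psi> \<bullet> x) W \<noteq> 0)"
  using assms
proof (induction "size W" arbitrary: W rule: less_induct)
  case less
  show ?case
  proof (rule ccontr)
    assume H: "\<not> ?case"
    have H': "SS (\<lambda>x. \<psi> \<bullet> x) W = 0" if "w \<in># W" "w \<noteq> 0" "\<psi> \<bullet> w = 0" for w \<psi>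
      using H that by blast
    show False
    proof (cases "\<exists>u\<in>#W. u \<noteq> 0 \<and> size (filter_mset (\<lambda>x. \<exists>c>0. x = c *\<^sub>R u) W) =
                                      size (filter_mset (\<lambda>x. \<exists>c<0. x = c *\<^sub>R u) W)")
      case True
      then obtain u where u: "u \<in># W" "u \<noteq> 0"
        "size (filter_mset (\<lambda>x. \<exists>c>0. x = c *\<^sub>R u) W) = size (filter_mset (\<lambda>x. \<exists>c<0. x = c *\<^sub>R u) W)"
        by blast
      define P where "P x \<longleftrightarrow> x \<noteq> 0 \<and> (\<exists>c. x = c *\<^sub>R u)" for x
      define W' where "W' = filter_mset (\<lambda>x. \<not> P x) W"
      define L where "L = filter_mset P W"
      have WL: "W = L + W'" unfolding L_def W'_def by (rule multiset_partition)
      have SSL: "SS (\<lambda>x. \<phi> \<bullet> x) L = 0" for \<phi> :: "real^'n"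
      proof -
        have "SS (\<lambda>x. \<phi> \<bullet> x) L = (\<Sum>x\<in>#W. if P x then sg (\<phi> \<bullet> x) else 0)"
          unfolding L_def by (rule SS_filter)
        also have "\<dots> = (\<Sum>x\<in>#W. sg (\<phi> \<bullet> u) * ((if \<exists>c>0. x = c *\<^sub>R u then 1 else 0) - (if \<exists>c<0. x = c *\<^sub>R u then 1 else 0)))"
        proof (rule arg_cong[where f=sum_mset], rule image_mset_cong)
          fix x
          show "(if P x then sg (\<phi> \<bullet> x) else 0) =
            sg (\<phi> \<bullet> u) * ((if \<exists>c>0. x = c *\<^sub>R u then 1 else 0) - (if \<exists>c<0. x = c *\<^sub>R u then 1 else 0))"
          proof (cases "P x")
            case True
            then obtain c where c: "x = c *\<^sub>R u" "c \<noteq> 0" unfolding P_def by auto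
            have uq: "\<And>d. x = d *\<^sub>R u \<Longrightarrow> d = c" using c u(2) scale_unique by metis
            show ?thesis
            proof (cases "c > 0")
              case True
              hence c1: "(\<exists>c>0. x = c *\<^sub>R u)" and c2: "\<not> (\<exists>c<0. x = c *\<^sub>R u)" using c uq by (blast, metis not_less_iff_gr_or_eq)
              have "sg (\<phi> \<bullet> x) = sg (\<phi> \<bullet> u)" using True c
                by (auto simp: sg_def zero_less_mult_iff mult_less_0_iff)
              thus ?thesis unfolding if_P[OF c1] if_not_P[OF c2] if_P[OF \<open>P x\<close>] by simp
            next
              case False
              hence cn: "c < 0" using c by simp
              hence c1: "\<not> (\<exists>c>0. x = c *\<^sub>R u)" and c2: "(\<exists>c<0. x = c *\<^sub>R u)" using c uq by (metis not_less_iff_gr_or_eq, blast)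
              have "sg (\<phi> \<bullet> x) = - sg (\<phi> \<bullet> u)" using cn c
                by (auto simp: sg_def zero_less_mult_iff mult_less_0_iff)
              thus ?thesis unfolding if_not_P[OF c1] if_P[OF c2] if_P[OF \<open>P x\<close>] by simp
            qed
          next
            case False
            hence c1: "\<not> (\<exists>c>0. x = c *\<^sub>R u)" and c2: "\<not> (\<exists>c<0. x = c *\<^sub>R u)" using u(2) unfolding P_def by auto
            show ?thesis unfolding if_not_P[OF c1] if_not_P[OF c2] if_not_P[OF False] by simp
          qed
        qed
        also have "\<dots> = 0" unfolding sum_ind_diff using u(3) by simp
        finally show ?thesis .
      qed
      have SSW: "SS (\<lambda>x. \<phi> \<bullet> x) W = SS (\<lambda>x. \<phi> \<bullet> x) W'" for \<phi> :: "real^'n"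
        using SSL[of \<phi>] WL by simp
      have NS': "\<exists>\<phi>. SS (\<lambda>x. \<phi> \<bullet> x) W' \<noteq> 0" using less.prems(1) SSW by metis
      have HW': "SS (\<lambda>x. \<psi> \<bullet> x) W' = 0" if "w \<in># W'" "w \<noteq> 0" "\<psi> \<bullet> w = 0" for w \<psi>
        using H'[of w \<psi>] that SSW[of \<psi>] by (simp add: W'_def)
      show False
      proof (cases "dim (set_mset W') \<ge> 3")
        case True
        have sz: "size W' < size W" unfolding W'_def
          by (rule size_filter_less[OF u(1)]) (use u(2) in \<open>auto simp: P_def intro: exI[of _ 1]\<close>)
        from less.hyps[OF sz NS' True] obtain w \<psi> where "w \<in># W'" "w \<noteq> 0" "\<psi> \<bullet> w = 0"
          "SS (\<lambda>x. \<psi> \<bullet> x) W' \<noteq> 0" by blast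
        with HW' show False by blast
      next
        case False
        have unot: "u \<notin> span (set_mset W')"
        proof
          assume us: "u \<in> span (set_mset W')"
          have "set_mset W \<subseteq> span (set_mset W')"
          proof
            fix x assume x: "x \<in> set_mset W"
            show "x \<in> span (set_mset W')"
            proof (cases "P x")
              case True
              then obtain c where "x = c *\<^sub>R u" unfolding P_def by auto
              thus ?thesis using us span_scale by auto
            next
              case False thus ?thesis using x by (auto simp: W'_def intro: span_base)
            qed
          qed
          hence "dim (set_mset W) \<le> dim (set_mset W')"
            by (metis dim_span dim_subset)
          thus False using False less.prems(2) by simp
        qed
        obtain z where z: "\<forall>s\<in>set_mset W'. z \<bullet> s = 0" "z \<bullet> u \<noteq> 0"
          using orth_exists[OF unot] by blast
        obtain \<phi> where \<phi>: "SS (\<lambda>x. \<phi> \<bullet> x) W' \<noteq> 0" using NS' by blast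
        define \<psi> where "\<psi> = \<phi> - ((\<phi> \<bullet> u) / (z \<bullet> u)) *\<^sub>R z"
        have \<psi>u: "\<psi> \<bullet> u = 0" using z(2) by (simp add: \<psi>_def inner_diff_left)
        have "SS (\<lambda>x. \<psi> \<bullet> x) W' = SS (\<lambda>x. \<phi> \<bullet> x) W'"
          by (rule SS_inner_cong) (use z(1) in \<open>simp add: \<psi>_def inner_diff_left\<close>)
        moreover have "SS (\<lambda>x. \<psi> \<bullet> x) W = 0" by (rule H'[OF u(1,2) \<psi>u])
        ultimately show False using \<phi> SSW[of \<psi>] by simp
      qed
    next
      case False
      hence unb: "\<And>u. u \<in># W \<Longrightarrow> u \<noteq> 0 \<Longrightarrow>
        size (filter_mset (\<lambda>x. \<exists>c>0. x = c *\<^sub>R u) W) \<noteq> size (filter_mset (\<lambda>x. \<exists>c<0. x = c *\<^sub>R u) W)"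
        by blast
      define X where "X = set_mset W - {0}"
      have finX: "finite X" by (simp add: X_def)
      have X0: "0 \<notin> X" by (simp add: X_def)
      have "span (set_mset W) \<subseteq> span X"
      proof -
        have "set_mset W \<subseteq> insert 0 X" by (auto simp: X_def)
        hence "span (set_mset W) \<subseteq> span (insert 0 X)" by (rule span_mono)
        thus ?thesis by simp
      qed
      hence "dim (set_mset W) \<le> dim X" by (metis dim_span dim_subset)
      hence dX: "dim X \<ge> 3" using less.prems(2) by simp
      obtain a b where ab: "a \<in> X" "b \<in> X" "\<forall>c. b \<noteq> c *\<^sub>R a"
        "\<forall>x\<in>X. x \<in> span {a, b} \<longrightarrow> (\<exists>c. x = c *\<^sub>R a) \<or> (\<exists>c. x = c *\<^sub>R b)"
        using SG_vec[OF finX X0 dX] by blast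
      have aW: "a \<in># W" "a \<noteq> 0" and bW: "b \<in># W" "b \<noteq> 0" using ab(1,2) by (auto simp: X_def)
      define T where "T = {h :: real^'n. h \<bullet> a = 0 \<and> h \<bullet> b = 0}"
      have subT: "subspace T" unfolding subspace_def T_def by (auto simp: inner_add_left)
      define Y where "Y = {x\<in>set_mset W. x \<notin> span {a, b}}"
      have allY: "\<forall>x\<in>Y. \<exists>t\<in>T. t \<bullet> x \<noteq> 0"
      proof
        fix x assume "x \<in> Y"
        hence "x \<notin> span {a, b}" by (simp add: Y_def)
        from orth_exists[OF this] obtain z where z: "\<forall>s\<in>{a, b}. z \<bullet> s = 0" "z \<bullet> x \<noteq> 0" by blast
        have "z \<in> T" using z(1) by (simp add: T_def)
        with z(2) show "\<exists>t\<in>T. t \<bullet> x \<noteq> 0" by blast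
      qed
      have finY: "finite Y" by (simp add: Y_def)
      obtain h where h: "h \<in> T" "\<forall>x\<in>Y. h \<bullet> x \<noteq> 0"
        using gen_sub[OF subT finY allY] by blast
      have hspan: "h \<bullet> x = 0 \<longleftrightarrow> x \<in> span {a, b}" if xW: "x \<in># W" for x
      proof
        assume hx: "h \<bullet> x = 0"
        show "x \<in> span {a, b}"
        proof (rule ccontr)
          assume "x \<notin> span {a, b}"
          hence "x \<in> Y" using xW by (simp add: Y_def)
          thus False using h(2) hx by blast
        qed
      next
        assume xs: "x \<in> span {a, b}"
        have ha: "h \<bullet> a = 0" and hb: "h \<bullet> b = 0" using h(1) by (simp_all add: T_def)
        show "h \<bullet> x = 0" by (rule orth_span[OF xs]) (use ha hb in auto)
      qed
      have bnot: "b \<notin> span {a}"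
      proof
        assume "b \<in> span {a}"
        then obtain c where "b = c *\<^sub>R a" unfolding span_singleton by blast
        thus False using ab(3) by blast
      qed
      obtain k where k: "\<forall>s\<in>{a}. k \<bullet> s = 0" "k \<bullet> b \<noteq> 0" using orth_exists[OF bnot] by blast
      have ka: "k \<bullet> a = 0" using k(1) by simp
      define F where "F = filter_mset (\<lambda>x. h \<bullet> x = 0) W"
      have zero: "SS (\<lambda>x. (h + e *\<^sub>R k') \<bullet> x) W = 0" if "k' \<bullet> a = 0" for e k'
      proof (rule H'[OF aW])
        show "(h + e *\<^sub>R k') \<bullet> a = 0" using h(1) that by (simp add: T_def inner_add_left)
      qed
      obtain e1 where e1: "e1 > 0" "SS (\<lambda>x. h \<bullet> x + e1 * (k \<bullet> x)) W = SS (\<lambda>x. h \<bullet> x) W + SS (\<lambda>x. k \<bullet> x) F"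
        using lex_SS[of "\<lambda>x. h \<bullet> x" "\<lambda>x. k \<bullet> x" W] unfolding F_def by blast
      obtain e2 where e2: "e2 > 0" "SS (\<lambda>x. h \<bullet> x + e2 * ((- k) \<bullet> x)) W = SS (\<lambda>x. h \<bullet> x) W + SS (\<lambda>x. (- k) \<bullet> x) F"
        using lex_SS[of "\<lambda>x. h \<bullet> x" "\<lambda>x. (- k) \<bullet> x" W] unfolding F_def by blast
      have fe1: "(\<lambda>x. h \<bullet> x + e1 * (k \<bullet> x)) = (\<lambda>x. (h + e1 *\<^sub>R k) \<bullet> x)"
        by (simp add: fun_eq_iff inner_add_left)
      have fe2: "(\<lambda>x. h \<bullet> x + e2 * ((- k) \<bullet> x)) = (\<lambda>x. (h + e2 *\<^sub>R (- k)) \<bullet> x)"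
        by (simp add: fun_eq_iff inner_add_left inner_diff_left)
      have z1: "SS (\<lambda>x. h \<bullet> x + e1 * (k \<bullet> x)) W = 0" unfolding fe1 by (rule zero) (rule ka)
      have z2: "SS (\<lambda>x. h \<bullet> x + e2 * ((- k) \<bullet> x)) W = 0" unfolding fe2 by (rule zero) (simp add: ka)
      have negk: "SS (\<lambda>x. (- k) \<bullet> x) F = - SS (\<lambda>x. k \<bullet> x) F"
        using SS_neg[of "\<lambda>x. k \<bullet> x" F] by simp
      have SSF0: "SS (\<lambda>x. k \<bullet> x) F = 0" using e1(2) e2(2) z1 z2 negk by linarith
      have "SS (\<lambda>x. k \<bullet> x) F = (\<Sum>x\<in>#W. if h \<bullet> x = 0 then sg (k \<bullet> x) else 0)"
        unfolding F_def by (rule SS_filter)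
      also have "\<dots> = (\<Sum>x\<in>#W. sg (k \<bullet> b) * ((if \<exists>c>0. x = c *\<^sub>R b then 1 else 0) - (if \<exists>c<0. x = c *\<^sub>R b then 1 else 0)))"
      proof (rule arg_cong[where f=sum_mset], rule image_mset_cong)
        fix x assume xW: "x \<in># W"
        have uqb: "\<And>c d. x = c *\<^sub>R b \<Longrightarrow> x = d *\<^sub>R b \<Longrightarrow> c = d" using bW(2) scale_unique by metis
        show "(if h \<bullet> x = 0 then sg (k \<bullet> x) else 0) =
          sg (k \<bullet> b) * ((if \<exists>c>0. x = c *\<^sub>R b then 1 else 0) - (if \<exists>c<0. x = c *\<^sub>R b then 1 else 0))"
        proof (cases "x \<in> span {a, b}")
          case False
          have "\<not> (\<exists>c. x = c *\<^sub>R b)"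
          proof
            assume "\<exists>c. x = c *\<^sub>R b"
            then obtain c where "x = c *\<^sub>R b" by blast
            hence "x \<in> span {a, b}" by (simp add: span_base span_scale)
            thus False using False by simp
          qed
          thus ?thesis using hspan[OF xW] False by auto
        next
          case True
          hence hx: "h \<bullet> x = 0" using hspan[OF xW] by simp
          show ?thesis
          proof (cases "x = 0")
            case True
            have "\<not> (\<exists>c>0. x = c *\<^sub>R b)" "\<not> (\<exists>c<0. x = c *\<^sub>R b)" using True bW(2) by auto
            thus ?thesis using True hx by (simp add: sg_def)
          next
            case False
            hence xX: "x \<in> X" using xW by (simp add: X_def)
            have "(\<exists>c. x = c *\<^sub>R a) \<or> (\<exists>c. x = c *\<^sub>R b)" using ab(4) xX True by blast
            thus ?thesis
            proof
              assume "\<exists>c. x = c *\<^sub>R a"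
              then obtain c where c: "x = c *\<^sub>R a" by blast
              have c0: "c \<noteq> 0" using c False by auto
              have nb: "\<not> (\<exists>d. x = d *\<^sub>R b)"
              proof
                assume "\<exists>d. x = d *\<^sub>R b"
                then obtain d where d: "x = d *\<^sub>R b" by blast
                have d0: "d \<noteq> 0" using d False by auto
                have "b = (1 / d) *\<^sub>R (d *\<^sub>R b)" using d0 by simp
                also have "\<dots> = (1 / d) *\<^sub>R (c *\<^sub>R a)" using c d by simp
                also have "\<dots> = (c / d) *\<^sub>R a" by simp
                finally have "b = (c / d) *\<^sub>R a" .
                thus False using ab(3) by blast
              qed
              have "k \<bullet> x = 0" using c ka by simp
              thus ?thesis using hx nb by (auto simp: sg_def)
            next
              assume "\<exists>c. x = c *\<^sub>R b"
              then obtain c where c: "x = c *\<^sub>R b" by blast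
              have c0: "c \<noteq> 0" using c False by auto
              show ?thesis
              proof (cases "c > 0")
                case True
                have c1: "\<exists>c>0. x = c *\<^sub>R b" using True c by blast
                have c2: "\<not> (\<exists>c<0. x = c *\<^sub>R b)"
                proof
                  assume "\<exists>c<0. x = c *\<^sub>R b"
                  then obtain d where d: "d < 0" "x = d *\<^sub>R b" by blast
                  from uqb[OF c d(2)] d(1) True show False by simp
                qed
                have "sg (k \<bullet> x) = sg (k \<bullet> b)" using True c
                  by (auto simp: sg_def zero_less_mult_iff mult_less_0_iff)
                thus ?thesis unfolding if_P[OF hx] if_P[OF c1] if_not_P[OF c2] by simp
              next
                case False
                hence cn: "c < 0" using c0 by simp
                have c2: "\<exists>c<0. x = c *\<^sub>R b" using cn c by blast
                have c1: "\<not> (\<exists>c>0. x = c *\<^sub>R b)"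
                proof
                  assume "\<exists>c>0. x = c *\<^sub>R b"
                  then obtain d where d: "d > 0" "x = d *\<^sub>R b" by blast
                  from uqb[OF c d(2)] d(1) cn show False by simp
                qed
                have "sg (k \<bullet> x) = - sg (k \<bullet> b)" using cn c
                  by (auto simp: sg_def zero_less_mult_iff mult_less_0_iff)
                thus ?thesis unfolding if_P[OF hx] if_not_P[OF c1] if_P[OF c2] by simp
              qed
            qed
          qed
        qed
      qed
      also have "\<dots> = sg (k \<bullet> b) * (int (size (filter_mset (\<lambda>x. \<exists>c>0. x = c *\<^sub>R b) W)) -
                                       int (size (filter_mset (\<lambda>x. \<exists>c<0. x = c *\<^sub>R b) W)))"
        by (rule sum_ind_diff)
      finally have "SS (\<lambda>x. k \<bullet> x) F \<noteq> 0" using unb[OF bW] k(2) by (auto simp: sg_def)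
      thus False using SSF0 by simp
    qed
  qed
qed



definition AF :: "('n::finite) vconf \<Rightarrow> bool" where
  "AF V \<longleftrightarrow> (\<forall>x\<in>#V. \<forall>y\<in>#V. \<forall>c<0. y \<noteq> c *\<^sub>R x)"

definition ispair :: "('n::finite) vconf \<Rightarrow> bool" where
  "ispair P \<longleftrightarrow> (\<exists>p c. p \<noteq> 0 \<and> c < 0 \<and> P = {#p, c *\<^sub>R p#})"

lemma SS_all_pos: "(\<forall>x\<in>#W. f x > 0) \<Longrightarrow> SS f W = int (size W)"
  by (induction W) (auto simp: sg_def)



definition pr :: "real^'n \<Rightarrow> real^'n \<Rightarrow> real^'n" where
  "pr w x = x - ((x \<bullet> w) / (w \<bullet> w)) *\<^sub>R w"

lemma pr_self: "pr w w = 0"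
  unfolding pr_def by (cases "w = 0") simp_all

lemma pr_sym: "pr w y \<bullet> x = y \<bullet> pr w x"
  unfolding pr_def by (simp add: inner_diff_left inner_diff_right inner_commute algebra_simps)

lemma pr_orth: "w \<noteq> 0 \<Longrightarrow> pr w x \<bullet> w = 0"
  unfolding pr_def by (simp add: inner_diff_left)

lemma pr_orth': "w \<noteq> 0 \<Longrightarrow> w \<bullet> pr w x = 0"
  unfolding pr_def by (simp add: inner_diff_right inner_commute)

lemma SS_zero_fun: "SS (\<lambda>x. 0) W = 0"
  by (induction W) (simp_all add: sg_def)

lemma pr_perp: "\<psi> \<bullet> w = 0 \<Longrightarrow> \<psi> \<bullet> pr w x = \<psi> \<bullet> x"
  unfolding pr_def by (simp add: inner_diff_right)

lemma pr_decomp: "x = pr w x + ((x \<bullet> w) / (w \<bullet> w)) *\<^sub>R w"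
  unfolding pr_def by simp

lemma dim_pr_lt:
  fixes S :: "(real^'n) set"
  assumes "w \<in> S" "w \<noteq> 0"
  shows "dim (pr w ` S) + 1 \<le> dim S"
proof -
  have sub: "insert w (pr w ` S) \<subseteq> span S"
  proof
    fix y assume "y \<in> insert w (pr w ` S)"
    then consider "y = w" | x where "x \<in> S" "y = pr w x" by blast
    thus "y \<in> span S"
    proof cases
      case 1 thus ?thesis using assms(1) by (simp add: span_base)
    next
      case 2 thus ?thesis using assms(1)
        by (simp add: pr_def span_diff span_scale span_base)
    qed
  qed
  have nw: "w \<notin> span (pr w ` S)"
  proof
    assume "w \<in> span (pr w ` S)"
    hence "w \<bullet> w = 0"
      by (rule orth_span) (auto simp: pr_orth'[OF assms(2)])
    thus False using assms(2) by simp
  qed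
  have "dim (insert w (pr w ` S)) = dim (pr w ` S) + 1" using nw by (simp add: dim_insert)
  moreover have "dim (insert w (pr w ` S)) \<le> dim S"
    using dim_subset[OF sub] by simp
  ultimately show ?thesis by simp
qed

lemma dim_pr_ge:
  fixes S :: "(real^'n) set"
  shows "dim S \<le> dim (pr w ` S) + 1"
proof -
  have "S \<subseteq> span (insert w (pr w ` S))"
  proof
    fix x assume x: "x \<in> S"
    have "pr w x \<in> span (insert w (pr w ` S))" using x by (intro span_base) auto
    moreover have "((x \<bullet> w) / (w \<bullet> w)) *\<^sub>R w \<in> span (insert w (pr w ` S))"
      by (intro span_scale span_base) simp
    ultimately show "x \<in> span (insert w (pr w ` S))"
      using span_add pr_decomp[of x w] by metis
  qed
  hence "dim S \<le> dim (insert w (pr w ` S))" by (metis dim_span dim_subset)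
  also have "\<dots> \<le> dim (pr w ` S) + 1" by (simp add: dim_insert)
  finally show ?thesis .
qed

lemma SS_image: "SS f (image_mset g W) = SS (\<lambda>x. f (g x)) W"
  unfolding SS_def by (simp add: image_mset.compositionality comp_def)

lemma gen_need:
  fixes W :: "(real^'n) multiset"
  assumes "\<exists>\<phi>. SS (\<lambda>x. \<phi> \<bullet> x) W \<noteq> 0"
  shows "\<exists>\<psi>. SS (\<lambda>x. \<psi> \<bullet> x) W \<noteq> 0 \<and>
             int (dim (set_mset (filter_mset (\<lambda>x. \<psi> \<bullet> x = 0) W))) \<ge> int (dim (set_mset W)) - 2"
  using assms
proof (induction "dim (set_mset W)" arbitrary: W rule: less_induct)
  case less
  show ?case
  proof (cases "dim (set_mset W) \<ge> 3")
    case False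
    obtain \<phi> where "SS (\<lambda>x. \<phi> \<bullet> x) W \<noteq> 0" using less.prems by blast
    thus ?thesis using False by (intro exI[of _ \<phi>]) auto
  next
    case True
    obtain w \<psi>0 where w: "w \<in># W" "w \<noteq> 0" "\<psi>0 \<bullet> w = 0" "SS (\<lambda>x. \<psi>0 \<bullet> x) W \<noteq> 0"
      using claim2[OF less.prems True] by blast
    define W' where "W' = image_mset (pr w) W"
    have setW': "set_mset W' = pr w ` set_mset W" by (simp add: W'_def)
    have "SS (\<lambda>x. \<psi>0 \<bullet> x) W' = SS (\<lambda>x. \<psi>0 \<bullet> x) W"
      unfolding W'_def SS_image pr_perp[OF w(3)] ..
    hence NS': "\<exists>\<phi>. SS (\<lambda>x. \<phi> \<bullet> x) W' \<noteq> 0" using w(4) by metis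
    have lt: "dim (set_mset W') < dim (set_mset W)"
      using dim_pr_lt[of w "set_mset W"] w(1,2) setW' by simp
    obtain \<psi>1 where \<psi>1: "SS (\<lambda>x. \<psi>1 \<bullet> x) W' \<noteq> 0"
      "int (dim (set_mset (filter_mset (\<lambda>x. \<psi>1 \<bullet> x = 0) W'))) \<ge> int (dim (set_mset W')) - 2"
      using less.hyps[OF lt NS'] by blast
    define \<psi> where "\<psi> = pr w \<psi>1"
    have \<psi>x: "\<psi> \<bullet> x = \<psi>1 \<bullet> pr w x" for x by (simp add: \<psi>_def pr_sym)
    have SSeq: "SS (\<lambda>x. \<psi> \<bullet> x) W = SS (\<lambda>x. \<psi>1 \<bullet> x) W'"
      unfolding W'_def SS_image \<psi>x ..
    define Xf where "Xf = filter_mset (\<lambda>x. \<psi> \<bullet> x = 0) W"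
    have imgX: "image_mset (pr w) Xf = filter_mset (\<lambda>y. \<psi>1 \<bullet> y = 0) W'"
      unfolding Xf_def W'_def \<psi>x by (rule image_mset_filter_mset_swap)
    have wX: "w \<in> set_mset Xf" using w(1) by (simp add: Xf_def \<psi>x pr_self)
    have d1: "dim (pr w ` set_mset Xf) + 1 \<le> dim (set_mset Xf)" by (rule dim_pr_lt[OF wX w(2)])
    have d1': "pr w ` set_mset Xf = set_mset (filter_mset (\<lambda>y. \<psi>1 \<bullet> y = 0) W')"
      using arg_cong[OF imgX, of set_mset] by simp
    have d2: "dim (set_mset W) \<le> dim (set_mset W') + 1"
      using dim_pr_ge[of "set_mset W" w] setW' by simp
    have "int (dim (set_mset Xf)) \<ge> int (dim (set_mset W)) - 2"
      using d1[unfolded d1'] d2 \<psi>1(2) by linarith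
    thus ?thesis using SSeq \<psi>1(1) unfolding Xf_def by (intro exI[of _ \<psi>]) simp
  qed
qed

lemma AF_sub: "AF V \<Longrightarrow> AF (filter_mset P V)"
  unfolding AF_def by auto

lemma KL_proof:
  fixes V :: "('n::finite) vconf"
  assumes "0 \<notin># V" "AF V"
  shows "int (vrank V) \<le> 2 * DD V"
  using assms
proof (induction "vrank V" arbitrary: V rule: less_induct)
  case less
  show ?case
  proof (cases "V = {#}")
    case True thus ?thesis using DD_nonneg[of V] by (simp add: vrank_def)
  next
    case False
    then obtain a where aV: "a \<in># V" by (meson multiset_nonemptyE)
    have a0: "a \<noteq> 0" using aV less.prems(1) by auto
    have NS: "\<exists>\<phi>. SS (\<lambda>x. \<phi> \<bullet> x) V \<noteq> 0"
    proof -
      define T where "T = {h :: real^'n. h \<bullet> a = 0}"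
      have subT: "subspace T" unfolding subspace_def T_def by (auto simp: inner_add_left)
      define Y where "Y = {x\<in>set_mset V. x \<notin> span {a}}"
      have allY: "\<forall>x\<in>Y. \<exists>t\<in>T. t \<bullet> x \<noteq> 0"
      proof
        fix x assume "x \<in> Y"
        hence "x \<notin> span {a}" by (simp add: Y_def)
        from orth_exists[OF this] obtain z where z: "\<forall>s\<in>{a}. z \<bullet> s = 0" "z \<bullet> x \<noteq> 0" by blast
        have "z \<in> T" using z(1) by (simp add: T_def)
        with z(2) show "\<exists>t\<in>T. t \<bullet> x \<noteq> 0" by blast
      qed
      have finY: "finite Y" by (simp add: Y_def)
      obtain h where h: "h \<in> T" "\<forall>x\<in>Y. h \<bullet> x \<noteq> 0" using gen_sub[OF subT finY allY] by blast
      have ha: "h \<bullet> a = 0" using h(1) by (simp add: T_def)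
      define Fa where "Fa = filter_mset (\<lambda>x. h \<bullet> x = 0) V"
      have posF: "\<forall>x\<in>#Fa. a \<bullet> x > 0"
      proof
        fix x assume xF: "x \<in># Fa"
        hence xV: "x \<in># V" and hx: "h \<bullet> x = 0" by (auto simp: Fa_def)
        have "x \<in> span {a}"
        proof (rule ccontr)
          assume "x \<notin> span {a}"
          hence "x \<in> Y" using xV by (simp add: Y_def)
          thus False using h(2) hx by blast
        qed
        then obtain c where c: "x = c *\<^sub>R a" unfolding span_singleton by blast
        have "c \<noteq> 0" using c xV less.prems(1) by auto
        moreover have "\<not> c < 0" using less.prems(2) aV xV c unfolding AF_def by blast
        ultimately have "c > 0" by simp
        thus "a \<bullet> x > 0" using c a0 by simp
      qed
      have aF: "a \<in># Fa" using aV ha by (simp add: Fa_def)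
      have SSFa: "SS (\<lambda>x. a \<bullet> x) Fa = int (size Fa)" by (rule SS_all_pos[OF posF])
      have szF: "size Fa \<ge> 1" using aF by (metis One_nat_def Suc_leI nonempty_has_size empty_iff set_mset_empty)
      obtain e1 where e1: "e1 > 0" "SS (\<lambda>x. h \<bullet> x + e1 * (a \<bullet> x)) V = SS (\<lambda>x. h \<bullet> x) V + SS (\<lambda>x. a \<bullet> x) Fa"
        using lex_SS[of "\<lambda>x. h \<bullet> x" "\<lambda>x. a \<bullet> x" V] unfolding Fa_def by blast
      obtain e2 where e2: "e2 > 0" "SS (\<lambda>x. h \<bullet> x + e2 * ((- a) \<bullet> x)) V = SS (\<lambda>x. h \<bullet> x) V + SS (\<lambda>x. (- a) \<bullet> x) Fa"
        using lex_SS[of "\<lambda>x. h \<bullet> x" "\<lambda>x. (- a) \<bullet> x" V] unfolding Fa_def by blast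
      have fe1: "(\<lambda>x. h \<bullet> x + e1 * (a \<bullet> x)) = (\<lambda>x. (h + e1 *\<^sub>R a) \<bullet> x)"
        by (simp add: fun_eq_iff inner_add_left)
      have fe2: "(\<lambda>x. h \<bullet> x + e2 * ((- a) \<bullet> x)) = (\<lambda>x. (h + e2 *\<^sub>R (- a)) \<bullet> x)"
        by (simp add: fun_eq_iff inner_add_left inner_diff_left)
      have negF: "SS (\<lambda>x. (- a) \<bullet> x) Fa = - SS (\<lambda>x. a \<bullet> x) Fa"
        using SS_neg[of "\<lambda>x. a \<bullet> x" Fa] by simp
      show ?thesis
      proof (rule ccontr)
        assume "\<not> ?thesis"
        hence all0: "\<And>\<phi>. SS (\<lambda>x. \<phi> \<bullet> x) V = 0" by blast
        have "SS (\<lambda>x. h \<bullet> x + e1 * (a \<bullet> x)) V = 0" unfolding fe1 by (rule all0)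
        moreover have "SS (\<lambda>x. h \<bullet> x + e2 * ((- a) \<bullet> x)) V = 0" unfolding fe2 by (rule all0)
        ultimately show False using e1(2) e2(2) negF SSFa szF by linarith
      qed
    qed
    obtain \<psi> where \<psi>: "SS (\<lambda>x. \<psi> \<bullet> x) V \<noteq> 0"
      "int (dim (set_mset (filter_mset (\<lambda>x. \<psi> \<bullet> x = 0) V))) \<ge> int (dim (set_mset V)) - 2"
      using gen_need[OF NS] by blast
    define V\<psi> where "V\<psi> = filter_mset (\<lambda>x. \<psi> \<bullet> x = 0) V"
    have rk2: "int (vrank V\<psi>) \<ge> int (vrank V) - 2" using \<psi>(2) by (simp add: vrank_def V\<psi>_def)
    have lt: "vrank V\<psi> < vrank V"
    proof (rule ccontr)
      assume "\<not> ?thesis"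
      hence ge: "dim (set_mset V) \<le> dim (set_mset V\<psi>)" by (simp add: vrank_def)
      have sub: "set_mset V\<psi> \<subseteq> set_mset V" by (auto simp: V\<psi>_def)
      have speq: "span (set_mset V\<psi>) = span (set_mset V)" by (rule dim_eq_span[OF sub ge])
      have "\<forall>x\<in>#V. \<psi> \<bullet> x = 0"
      proof
        fix x assume xV: "x \<in># V"
        have "x \<in> span (set_mset V)" using xV by (rule span_base)
        hence "x \<in> span (set_mset V\<psi>)" using speq by simp
        thus "\<psi> \<bullet> x = 0" by (rule orth_span) (simp add: V\<psi>_def)
      qed
      hence "SS (\<lambda>x. \<psi> \<bullet> x) V = SS (\<lambda>x. 0) V" by (intro SS_cong) simp
      hence "SS (\<lambda>x. \<psi> \<bullet> x) V = 0" by (simp add: SS_zero_fun)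
      thus False using \<psi>(1) by simp
    qed
    have IH: "int (vrank V\<psi>) \<le> 2 * DD V\<psi>"
      by (rule less.hyps[OF lt]) (use less.prems in \<open>auto simp: V\<psi>_def intro: AF_sub\<close>)
    obtain f where f: "linear f" "SS f V\<psi> = DD V\<psi>" using DD_ex_pos by blast
    define \<psi>' where "\<psi>' = (if SS (\<lambda>x. \<psi> \<bullet> x) V > 0 then \<psi> else - \<psi>)"
    have S1: "SS (\<lambda>x. \<psi>' \<bullet> x) V \<ge> 1"
      using \<psi>(1) SS_neg[of "\<lambda>x. \<psi> \<bullet> x" V] by (auto simp: \<psi>'_def)
    have Vp: "filter_mset (\<lambda>x. \<psi>' \<bullet> x = 0) V = V\<psi>" by (auto simp: \<psi>'_def V\<psi>_def)
    obtain e where e: "e > 0" "SS (\<lambda>x. \<psi>' \<bullet> x + e * f x) V = SS (\<lambda>x. \<psi>' \<bullet> x) V + SS f (filter_mset (\<lambda>x. \<psi>' \<bullet> x = 0) V)"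
      using lex_SS[of "\<lambda>x. \<psi>' \<bullet> x" f V] by blast
    have lin: "linear (\<lambda>x. \<psi>' \<bullet> x + e * f x)" by (rule linear_plus_scaled[OF linear_inner_fun f(1)])
    have "SS (\<lambda>x. \<psi>' \<bullet> x + e * f x) V \<le> DD V" by (rule DD_ge'[OF lin])
    hence "1 + DD V\<psi> \<le> DD V" using e(2)[unfolded Vp] S1 f(2) by linarith
    thus ?thesis using IH rk2 by linarith
  qed
qed

lemma SS_pair:
  fixes f :: "real^'n::finite \<Rightarrow> real"
  assumes "linear f" "ispair P" shows "SS f P = 0"
proof -
  obtain p c where P: "p \<noteq> 0" "c < 0" "P = {#p, c *\<^sub>R p#}" using assms(2) ispair_def by blast
  have "f (c *\<^sub>R p) = c * f p" using linear_cmul[OF assms(1)] by simp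
  thus ?thesis using P(2,3) by (auto simp: sg_def mult_less_0_iff zero_less_mult_iff)
qed

lemma SS_pairs:
  fixes f :: "real^'n::finite \<Rightarrow> real"
  assumes "linear f" "\<forall>P\<in>set ps. ispair P" shows "SS f (sum_list ps) = 0"
  using assms(2) by (induction ps) (auto simp: SS_pair[OF assms(1)])

lemma pair_nz: "ispair P \<Longrightarrow> 0 \<notin># P"
  unfolding ispair_def by auto

lemma pairs_nz: "\<forall>P\<in>set ps. ispair P \<Longrightarrow> 0 \<notin># sum_list ps"
  by (induction ps) (auto dest: pair_nz)

lemma codeg_pair: assumes "ispair P" shows "codeg_star P = 1"
proof -
  obtain p c where P: "p \<noteq> 0" "c < 0" "P = {#p, c *\<^sub>R p#}" using assms ispair_def by blast
  have pp: "p \<bullet> p > 0" using P(1) by simp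
  hence pp': "\<not> p \<bullet> p \<le> 0" by linarith
  have "codeg_star P \<le> nclosedneg (\<lambda>x. p \<bullet> x) P" by (rule codeg_le[OF nzf_inner[OF P(1)]])
  also have "\<dots> = 1" using P pp by (auto simp: nclosedneg_def mult_le_0_iff pp')
  finally have le: "codeg_star P \<le> 1" .
  obtain f where f: "f \<in> nonzero_functionals" "codeg_star P = nclosedneg f P" using codeg_ex by blast
  have lf: "linear f" using f(1) nonzero_functionals_def by auto
  have fc: "f (c *\<^sub>R p) = c * f p" using linear_cmul[OF lf] by simp
  have "nclosedneg f P \<ge> 1" using P(2,3) fc by (auto simp: nclosedneg_def mult_le_0_iff)
  with le f show ?thesis by simp
qed

lemma ncn_pair_generic:
  assumes "linear g" "ispair P" "\<forall>x\<in>#P. g x \<noteq> 0" shows "nclosedneg g P = 1"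
proof -
  obtain p c where P: "p \<noteq> 0" "c < 0" "P = {#p, c *\<^sub>R p#}" using assms(2) ispair_def by blast
  have fc: "g (c *\<^sub>R p) = c * g p" using linear_cmul[OF assms(1)] by simp
  have "g p \<noteq> 0" using assms(3) P(3) by simp
  thus ?thesis using P(2,3) fc by (auto simp: nclosedneg_def mult_le_0_iff)
qed

lemma ncn_empty[simp]: "nclosedneg g {#} = 0" by (simp add: nclosedneg_def)

lemma ncn_pairs_generic:
  assumes "linear g" "\<forall>P\<in>set ps. ispair P" "\<forall>x\<in>#sum_list ps. g x \<noteq> 0"
  shows "nclosedneg g (sum_list ps) = length ps"
  using assms(2,3) by (induction ps) (auto simp: ncn_pair_generic[OF assms(1)])

lemma codeg_pairs_map: "\<forall>P\<in>set ps. ispair P \<Longrightarrow> sum_list (map codeg_star ps) = length ps"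
  by (induction ps) (auto simp: codeg_pair)

lemma pair_extract:
  fixes V :: "('n::finite) vconf"
  assumes "0 \<notin># V"
  shows "\<exists>R ps. V = R + sum_list ps \<and> (\<forall>P\<in>set ps. ispair P) \<and> AF R"
  using assms
proof (induction "size V" arbitrary: V rule: less_induct)
  case less
  show ?case
  proof (cases "AF V")
    case True thus ?thesis by (intro exI[of _ V] exI[of _ "[]"]) simp
  next
    case False
    then obtain x y c where xy: "x \<in># V" "y \<in># V" "c < 0" "y = c *\<^sub>R x" unfolding AF_def by blast
    have x0: "x \<noteq> 0" using xy(1) less.prems by auto
    have yx: "y \<noteq> x"
    proof
      assume "y = x"
      hence "(1 - c) *\<^sub>R x = 0" using xy(4) by (simp add: algebra_simps)
      thus False using x0 xy(3) by simp
    qed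
    define P where "P = {#x, y#}"
    have sub: "P \<subseteq># V" unfolding P_def using xy(1,2) yx
      by (simp add: insert_subset_eq_iff in_diff_count)
    define V' where "V' = V - P"
    have VV: "V = P + V'" unfolding V'_def using sub by (simp add: subset_mset.add_diff_inverse)
    have sz: "size V' < size V" using VV by (simp add: P_def)
    have nz: "0 \<notin># V'" using less.prems VV by auto
    obtain R ps where R: "V' = R + sum_list ps" "\<forall>P\<in>set ps. ispair P" "AF R"
      using less.hyps[OF sz nz] by blast
    have "ispair P" unfolding ispair_def P_def using x0 xy(3,4) by blast
    hence "V = R + sum_list (P # ps) \<and> (\<forall>Q\<in>set (P # ps). ispair Q) \<and> AF R"
      using R VV by (simp add: algebra_simps)
    thus ?thesis by blast
  qed
qed

lemma vrank_pair_step: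
  assumes "ispair P" shows "vrank (A + P) \<le> vrank A + 1"
proof -
  obtain p c where P: "p \<noteq> 0" "c < 0" "P = {#p, c *\<^sub>R p#}" using assms ispair_def by blast
  have cp: "c *\<^sub>R p \<in> span (insert p (set_mset A))" by (intro span_scale span_base) simp
  have "set_mset (A + P) = insert (c *\<^sub>R p) (insert p (set_mset A))" using P(3) by auto
  hence "span (set_mset (A + P)) = span (insert p (set_mset A))" using span_redundant[OF cp] by simp
  hence "dim (set_mset (A + P)) = dim (insert p (set_mset A))" by (rule span_eq_dim)
  also have "\<dots> \<le> dim (set_mset A) + 1" by (simp add: dim_insert)
  finally show ?thesis unfolding vrank_def by simp
qed

lemma vrank_pairs:
  assumes "\<forall>P\<in>set ps. ispair P" shows "vrank (R + sum_list ps) \<le> vrank R + length ps"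
  using assms
proof (induction ps)
  case Nil thus ?case by simp
next
  case (Cons P ps)
  have "vrank (R + sum_list (P # ps)) = vrank ((R + sum_list ps) + P)" by (simp add: algebra_simps)
  also have "\<dots> \<le> vrank (R + sum_list ps) + 1" using Cons.prems by (intro vrank_pair_step) simp
  finally show ?case using Cons by simp
qed

lemma card_set_mset_le: "card (set_mset M) \<le> size M"
  by (induction M) (auto simp: card_insert_if)

lemma vrank_le_size: "vrank R \<le> size R"
proof -
  have "dim (set_mset R) \<le> card (set_mset R)" by (rule dim_le_card) (auto intro: span_base)
  thus ?thesis unfolding vrank_def using card_set_mset_le[of R] by simp
qed

lemma codeg_pairs:
  fixes R :: "('n::finite) vconf"
  assumes "\<forall>P\<in>set ps. ispair P" "0 \<notin># R"
  shows "codeg_star (R + sum_list ps) = codeg_star R + length ps"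
proof -
  have ge: "codeg_star R + length ps \<le> codeg_star (R + sum_list ps)" using assms(1)
  proof (induction ps)
    case Nil thus ?case by simp
  next
    case (Cons P ps)
    have "codeg_star R + length (P # ps) \<le> codeg_star (R + sum_list ps) + codeg_star P"
      using Cons by (simp add: codeg_pair)
    also have "\<dots> \<le> codeg_star ((R + sum_list ps) + P)" by (rule codeg_superadd)
    finally show ?case by (simp add: algebra_simps)
  qed
  show ?thesis
  proof (cases "R + sum_list ps = {#}")
    case True
    hence "ps = []" using assms(1) by (cases ps) (auto simp: ispair_def)
    thus ?thesis by simp
  next
    case False
    define V where "V = R + sum_list ps"
    have nz: "0 \<notin># V" using assms pairs_nz unfolding V_def by auto
    obtain f0 where f0: "f0 \<in> nonzero_functionals" "codeg_star R = nclosedneg f0 R" using codeg_ex by blast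
    have lf0: "linear f0" using f0(1) nonzero_functionals_def by auto
    obtain g where g: "linear g" "\<forall>x\<in>#V. g x \<noteq> 0 \<and> (f0 x > 0 \<longrightarrow> g x > 0) \<and> (f0 x < 0 \<longrightarrow> g x < 0)"
      "SS f0 V \<le> SS g V"
      using pert[OF lf0 nz] by blast
    obtain x0 where "x0 \<in># V" using False V_def by (meson multiset_nonemptyE)
    hence gnz: "g \<in> nonzero_functionals" using g nonzero_fun_of_val by blast
    have "nclosedneg g R \<le> nclosedneg f0 R" unfolding nclosedneg_def
      by (rule size_filter_mono) (use g(2) V_def in force)
    moreover have "nclosedneg g (sum_list ps) = length ps"
      by (rule ncn_pairs_generic[OF g(1) assms(1)]) (use g(2) V_def in auto)
    ultimately have "nclosedneg g V \<le> codeg_star R + length ps" using f0(2) V_def by simp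
    with codeg_le[OF gnz, of V] have "codeg_star V \<le> codeg_star R + length ps" by simp
    with ge show ?thesis unfolding V_def by simp
  qed
qed

lemma DD_empty: "DD ({#} :: ('n::finite) vconf) = 0"
  using DD_ex[of "{#} :: ('n::finite) vconf"] by auto

theorem mainTheorem1:
  fixes V :: "(real^'n::finite) multiset"
  assumes "0 \<notin># V"
    and "DD V > 0"
  shows "(let r = int (vrank V); \<delta> = deg_star V; d = int (size V) - r - 1 in
           r + 1 - 2 * DD V = 2 * (d + 1 - 2 * \<delta>) - r + 1 \<and>
           2 * (d + 1 - 2 * \<delta>) - r + 1 = 3 * d + 4 - 4 * \<delta> - int (size V) \<and>
           (\<exists>V0 Vs. codeg_star_decomp V V0 Vs \<and> int (length Vs) \<ge> r + 1 - 2 * DD V))"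
proof -
  have Vne: "V \<noteq> {#}"
  proof
    assume "V = {#}" with assms(2) show False by (simp add: DD_empty)
  qed
  have DDf: "DD V = 2 * int (MX V) - int (size V)" by (rule DD_formula[OF assms(1) Vne])
  have degf: "deg_star V = int (MX V) - int (vrank V)" by (simp add: deg_star_def MX_def)
  obtain R ps where R: "V = R + sum_list ps" "\<forall>P\<in>set ps. ispair P" "AF R"
    using pair_extract[OF assms(1)] by blast
  have R0: "0 \<notin># R" using assms(1) R(1) by auto
  have DDR: "DD V = DD R" unfolding R(1)
    by (rule DD_eq_SS) (simp add: SS_pairs[OF _ R(2)])
  have KLR: "int (vrank R) \<le> 2 * DD R" by (rule KL_proof[OF R0 R(3)])
  have rk: "vrank V \<le> vrank R + length ps" unfolding R(1) by (rule vrank_pairs[OF R(2)])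
  have cg: "codeg_star V = codeg_star R + length ps" unfolding R(1) by (rule codeg_pairs[OF R(2) R0])
  have cg1: "\<forall>W\<in>set ps. codeg_star W = 1" using R(2) codeg_pair by auto
  have decomp: "\<exists>V0 Vs. codeg_star_decomp V V0 Vs \<and> int (length Vs) \<ge> int (vrank V) + 1 - 2 * DD V"
  proof (cases "codeg_star R \<ge> 1")
    case True
    have "codeg_star_decomp V {#} (R # ps)"
      unfolding codeg_star_decomp_def using R(1,2) cg True codeg_pairs_map[OF R(2)] cg1
      by auto
    moreover have "int (length (R # ps)) \<ge> int (vrank V) + 1 - 2 * DD V"
      using rk KLR DDR by simp
    ultimately show ?thesis by blast
  next
    case False
    hence c0: "codeg_star R = 0" by simp
    obtain f where f: "f \<in> nonzero_functionals" "codeg_star R = nclosedneg f R" using codeg_ex by blast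
    have lf: "linear f" using f(1) nonzero_functionals_def by auto
    have allpos: "\<forall>x\<in>#R. f x > 0"
    proof
      fix x assume x: "x \<in># R"
      have "size (filter_mset (\<lambda>w. f w \<le> 0) R) = 0" using f(2) c0 by (simp add: nclosedneg_def)
      hence "filter_mset (\<lambda>w. f w \<le> 0) R = {#}" by simp
      thus "f x > 0" using x using filter_mset_eq_mempty_iff by fastforce
    qed
    have "int (size R) \<le> DD R" using DD_ge'[OF lf, of R] SS_all_pos[OF allpos] by simp
    moreover have "R \<noteq> {#}"
    proof
      assume "R = {#}" with DDR assms(2) show False by (simp add: DD_empty)
    qed
    hence "size R \<ge> 1" by (simp add: Suc_le_eq nonempty_has_size)
    moreover have "vrank R \<le> size R" by (rule vrank_le_size)
    ultimately have ineq: "int (vrank R) + 1 \<le> 2 * DD R" by linarith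
    have "codeg_star_decomp V R ps"
      unfolding codeg_star_decomp_def using R(1,2) cg c0 codeg_pairs_map[OF R(2)] cg1
      by auto
    moreover have "int (length ps) \<ge> int (vrank V) + 1 - 2 * DD V"
      using rk ineq DDR by simp
    ultimately show ?thesis by blast
  qed
  show ?thesis
    unfolding Let_def
    apply (intro conjI)
    subgoal using DDf degf by (simp add: algebra_simps)
    subgoal by (simp add: algebra_simps)
    subgoal using decomp by blast
    done
qed


end
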